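(* There exists an infinite maximal triangle-free graph which satisfies property $\mathscr{D}_k$ for every $k\ge1$ but which is not a blow-up of any finite graph.
   Context: A (possibly infinite) graph is maximal triangle-free if it contains no triangle but adding any new edge between non-adjacent vertices creates a triangle. Property $\mathscr{D}_k$: for every $m\in\{1,\dots,k\}$ and every sequence $x_1,\dots,x_{3m}$ of (not necessarily distinct) vertices there is a vertex $y$ with $|\{i\in[3m]: x_iy\in E(G)\}|\ge m+1$. A blow-up of $H$ is any graph obtained by replacing each vertex of $H$ by a non-empty independent set (possibly infinite) and each edge of $H$ by the complete bipartite graph between the corresponding sets, with no further edges. *)

theory Defs
  imports Main
begin

definition simple_graph :: "'a set \<Rightarrow> ('a \<Rightarrow> 'a \<Rightarrow> bool) \<Rightarrow> bool" where
  "simple_graph V E \<longleftrightarrow>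
     (\<forall>x y. E x y \<longrightarrow> x \<in> V \<and> y \<in> V) \<and>
     (\<forall>x y. E x y \<longrightarrow> E y x) \<and> (\<forall>x. \<not> E x x)"

definition triangle_free :: "'a set \<Rightarrow> ('a \<Rightarrow> 'a \<Rightarrow> bool) \<Rightarrow> bool" where
  "triangle_free V E \<longleftrightarrow>
     \<not> (\<exists>x\<in>V. \<exists>y\<in>V. \<exists>z\<in>V. E x y \<and> E y z \<and> E x z)"

definition maximal_triangle_free :: "'a set \<Rightarrow> ('a \<Rightarrow> 'a \<Rightarrow> bool) \<Rightarrow> bool" where
  "maximal_triangle_free V E \<longleftrightarrow>
     simple_graph V E \<and> triangle_free V E \<and>
     (\<forall>x\<in>V. \<forall>y\<in>V. x \<noteq> y \<and> \<not> E x y \<longrightarrow> (\<exists>z\<in>V. E x z \<and> E y z))"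

definition property_D :: "nat \<Rightarrow> 'a set \<Rightarrow> ('a \<Rightarrow> 'a \<Rightarrow> bool) \<Rightarrow> bool" where
  "property_D k V E \<longleftrightarrow>
     (\<forall>m\<in>{1..k}. \<forall>x :: nat \<Rightarrow> 'a. (\<forall>i\<in>{1..3*m}. x i \<in> V) \<longrightarrow>
        (\<exists>y\<in>V. card {i\<in>{1..3*m}. E (x i) y} \<ge> m + 1))"

text \<open>(V,E) is a blow-up of (W,F): there is a map f from V onto W (so every
  class f^{-1}(w) is a non-empty independent set) such that adjacency in
  (V,E) is exactly adjacency of the images in (W,F).\<close>
definition blow_up_of :: "'a set \<Rightarrow> ('a \<Rightarrow> 'a \<Rightarrow> bool) \<Rightarrow> 'b set \<Rightarrow> ('b \<Rightarrow> 'b \<Rightarrow> bool) \<Rightarrow> bool" where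
  "blow_up_of V E W F \<longleftrightarrow>
     (\<exists>f. f ` V = W \<and> (\<forall>u\<in>V. \<forall>v\<in>V. E u v \<longleftrightarrow> F (f u) (f v)))"

end

theory Submission
  imports Defs Complex_Main "HOL-Library.Nat_Bijection"
begin


definition ex :: "nat \<Rightarrow> nat" where "ex n = snd (prod_decode n)"
definition num :: "nat \<Rightarrow> nat" where "num n = fst (prod_decode n) mod 2^(ex n)"
definition pt :: "nat \<Rightarrow> real" where "pt n = real (num n) / 2^(ex n)"
definition Eg :: "nat \<Rightarrow> nat \<Rightarrow> bool" where
  "Eg u v \<longleftrightarrow> 1/3 < \<bar>pt u - pt v\<bar> \<and> \<bar>pt u - pt v\<bar> < 2/3"

lemma num_lt: "num n < 2^(ex n)"
  unfolding num_def by simp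

lemma pt_range: "0 \<le> pt n \<and> pt n < 1"
proof -
  have "real (num n) < 2^(ex n)" using num_lt[of n]
    by (metis of_nat_less_iff of_nat_numeral of_nat_power)
  then show ?thesis unfolding pt_def by (simp add: divide_less_eq)
qed

lemma pt_encode: "t < 2^j \<Longrightarrow> pt (prod_encode (t,j)) = real t / 2^j"
  unfolding pt_def num_def ex_def by (simp add: prod_encode_inverse)

lemma pt_grid: "ex n \<le> J \<Longrightarrow> \<exists>s < 2^J. pt n = real s / 2^J"
proof -
  assume J: "ex n \<le> J"
  define s where "s = num n * 2^(J - ex n)"
  have e: "(2::nat)^J = 2^(ex n) * 2^(J - ex n)" using J by (simp add: power_add[symmetric])
  have "s < 2^J" unfolding s_def e using num_lt[of n] by simp
  moreover have "pt n = real s / 2^J" unfolding s_def pt_def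
    using e by (simp add: field_simps) (metis of_nat_numeral of_nat_power of_nat_mult e)
  ultimately show ?thesis by blast
qed

lemma density:
  assumes "0 \<le> a" "a < b" "b \<le> 1"
  shows "\<exists>n. a < pt n \<and> pt n < b"
proof -
  obtain j where j: "1 / (b - a) < (2::real)^j" using real_arch_pow[of 2 "1/(b-a)"] by auto
  have p: "(0::real) < 2^j" by simp
  have jj: "1 / 2^j < b - a" using j assms by (simp add: field_simps)
  define t where "t = nat (floor (a * 2^j)) + 1"
  have t1: "real t = of_int (floor (a * 2^j)) + 1" unfolding t_def using assms by simp
  have "a * 2^j < real t" using t1 by linarith
  hence lo: "a < real t / 2^j" using p by (simp add: field_simps)
  have "real t \<le> a * 2^j + 1" using t1 by linarith
  hence "real t / 2^j \<le> a + 1/2^j" using p by (simp add: field_simps)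
  hence hi: "real t / 2^j < b" using jj by linarith
  hence "real t < b * 2^j" using p by (simp add: field_simps)
  moreover have "b * 2^j \<le> 2^j" using assms p by simp
  ultimately have "real t < 2^j" by linarith
  hence tl: "t < 2^j" by (metis of_nat_less_iff of_nat_numeral of_nat_power)
  show ?thesis using pt_encode[OF tl] lo hi by metis
qed

lemma pow2_mod3: "(2::int)^J mod 3 = 1 \<or> (2::int)^J mod 3 = 2"
proof (induction J)
  case 0 then show ?case by simp
next
  case (Suc J)
  have "(2::int)^Suc J mod 3 = (2 * ((2::int)^J mod 3)) mod 3" by (simp add: mod_mult_right_eq)
  with Suc show ?case by auto
qed

lemma not3: "\<not> (3::int) dvd e * 2^J" if "e \<in> {1,-1,2,-2}" for e
proof
  assume "(3::int) dvd e * 2^J"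
  hence "(e * 2^J) mod 3 = 0" by simp
  hence "((e mod 3) * (2^J mod 3)) mod 3 = (0::int)" by (simp add: mod_mult_eq)
  with pow2_mod3[of J] that show False by auto
qed

lemma not_third:
  assumes "e \<in> {1,-1,2,-2::int}"
  shows "3 * (pt u - pt v) \<noteq> of_int e"
proof
  assume h: "3 * (pt u - pt v) = of_int e"
  define J where "J = ex u + ex v"
  obtain s where s: "pt u = real s / 2^J" using pt_grid[of u J] J_def by auto
  obtain s' where s': "pt v = real s' / 2^J" using pt_grid[of v J] J_def by auto
  have "3 * (real s - real s') = of_int e * 2^J" using h s s' by (simp add: field_simps)
  hence "of_int (3 * (int s - int s')) = (of_int (e * 2^J) :: real)" by simp
  hence "3 * (int s - int s') = e * 2^J" using of_int_eq_iff by blast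
  hence "(3::int) dvd e * 2^J" by (metis dvd_triv_left)
  with not3[OF assms] show False by blast
qed

lemma tri_free: "\<not> (Eg x y \<and> Eg y z \<and> Eg x z)"
  using pt_range[of x] pt_range[of y] pt_range[of z]
  unfolding Eg_def by (auto simp: abs_if split: if_splits)

lemma common:
  assumes "x \<noteq> y" "\<not> Eg x y" "pt x \<noteq> pt y"
  shows "\<exists>z. Eg x z \<and> Eg y z"
proof -
  have g: "\<exists>z. Eg a z \<and> Eg b z" if ab: "pt a < pt b" "\<not> Eg a b" for a b
  proof -
    let ?a = "pt a" and ?b = "pt b"
    have n1: "3 * (?b - ?a) \<noteq> 1" using not_third[of 1 b a] by simp
    have n2: "3 * (?b - ?a) \<noteq> 2" using not_third[of 2 b a] by simp
    have ra: "0 \<le> ?a" "?a < 1" "0 \<le> ?b" "?b < 1" using pt_range by auto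
    have c: "?b - ?a < 1/3 \<or> ?b - ?a > 2/3" using ab n1 n2 unfolding Eg_def by auto
    show ?thesis
    proof (cases "?b - ?a > 2/3")
      case True
      obtain z where "?a + 1/3 < pt z" "pt z < ?b - 1/3" using density[of "?a+1/3" "?b - 1/3"] True ra by auto
      then show ?thesis unfolding Eg_def using ra True ab by (intro exI[of _ z]) (auto simp: abs_if)
    next
      case False
      hence d: "?b - ?a < 1/3" using c by auto
      show ?thesis
      proof (cases "?a + 2/3 \<le> 1")
        case True
        obtain z where "?b + 1/3 < pt z" "pt z < ?a + 2/3" using density[of "?b+1/3" "?a + 2/3"] True ra d by auto
        then show ?thesis unfolding Eg_def using ra d ab by (intro exI[of _ z]) (auto simp: abs_if)
      next
        case F2: False
        show ?thesis
        proof (cases "?b + 1/3 \<ge> 1")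
          case True
          obtain z where "?b - 2/3 < pt z" "pt z < ?a - 1/3" using density[of "?b-2/3" "?a - 1/3"] True ra d by auto
          then show ?thesis unfolding Eg_def using ra d ab by (intro exI[of _ z]) (auto simp: abs_if)
        next
          case False
          obtain z where "?b + 1/3 < pt z" "pt z < 1" using density[of "?b+1/3" 1] False ra by auto
          then show ?thesis unfolding Eg_def using ra d F2 ab by (intro exI[of _ z]) (auto simp: abs_if)
        qed
      qed
    qed
  qed
  show ?thesis
  proof (cases "pt x < pt y")
    case True then show ?thesis using g assms by blast
  next
    case False
    hence "pt y < pt x" using assms by auto
    moreover have "\<not> Eg y x" using assms unfolding Eg_def by (simp add: abs_minus_commute)
    ultimately obtain z where "Eg y z \<and> Eg x z" using g by blast
    then show ?thesis by blast
  qed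
qed


lemma card_sum: "finite I \<Longrightarrow> card {i\<in>I. P i} = (\<Sum>i\<in>I. if P i then 1 else (0::nat))"
  by (simp add: sum.If_cases Int_def)

lemma pow_odd_mod3: "(2::nat)^(2*a+1) mod 3 = 2"
proof (induction a)
  case 0 then show ?case by simp
next
  case (Suc a)
  have "(2::nat)^(2*Suc a+1) = 4 * 2^(2*a+1)" by simp
  hence "(2::nat)^(2*Suc a+1) mod 3 = (4 * (2^(2*a+1) mod 3)) mod 3" by (simp add: mod_mult_right_eq)
  with Suc show ?case by simp
qed

lemma mod_inj_aux:
  fixes a b N :: nat
  assumes "a mod N = b mod N" "a \<le> b" "b < a + N"
  shows "a = b"
proof -
  have "N dvd b - a" using assms mod_eq_dvd_iff_nat by metis
  moreover have "b - a < N" using assms by simp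
  ultimately show ?thesis using assms by (metis dvd_imp_le le_antisym diff_is_0_eq' not_less zero_less_diff)
qed

lemma grid_adj:
  fixes s k N l :: nat
  assumes "s < N" "3*k = N+1" "l < k"
  shows "1/3 < \<bar>real ((s+k+l) mod N) / N - real s / N\<bar> \<and> \<bar>real ((s+k+l) mod N) / N - real s / N\<bar> < 2/3"
proof -
  have Np: "(0::real) < N" using assms by simp
  have e: "\<bar>real ((s+k+l) mod N) / N - real s / N\<bar> = \<bar>real ((s+k+l) mod N) - real s\<bar> / N"
    using Np by (simp add: diff_divide_distrib[symmetric] abs_divide)
  have rk: "3 * real k = real N + 1" using assms(2) by (metis of_nat_1 of_nat_add of_nat_mult of_nat_numeral)
  have rl: "real l + 1 \<le> real k" using assms(3) by linarith
  have key: "real N < 3 * \<bar>real ((s+k+l) mod N) - real s\<bar> \<and> 3 * \<bar>real ((s+k+l) mod N) - real s\<bar> < 2 * real N"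
  proof (cases "s+k+l < N")
    case True
    hence "(s+k+l) mod N = s+k+l" by simp
    hence "real ((s+k+l) mod N) - real s = real k + real l" by simp
    then show ?thesis using rk rl by simp
  next
    case False
    have lt: "s+k+l - N < N" using assms by linarith
    have "(s+k+l) mod N = (s+k+l - N) mod N" using False by (simp add: le_mod_geq)
    also have "\<dots> = s+k+l-N" using lt by simp
    finally have "real ((s+k+l) mod N) = real s + real k + real l - real N" using False by (simp add: of_nat_diff)
    hence "real ((s+k+l) mod N) - real s = real k + real l - real N" by simp
    moreover have "real s < real N" using assms by simp
    ultimately show ?thesis using rk rl by (simp add: abs_if)
  qed
  show ?thesis unfolding e using key Np by (simp add: field_simps)
qed

lemma grid_count:
  fixes s k N :: nat
  assumes "s < N" "3*k = N+1"
  shows "k \<le> card {t\<in>{..<N}. 1/3 < \<bar>real t / N - real s / N\<bar> \<and> \<bar>real t / N - real s / N\<bar> < 2/3}"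
proof -
  let ?f = "\<lambda>l. (s+k+l) mod N"
  have Np: "0 < N" using assms by simp
  have kN: "k \<le> N" using assms by linarith
  have inj: "inj_on ?f {..<k}"
  proof (rule inj_onI)
    fix a b assume a: "a \<in> {..<k}" and b: "b \<in> {..<k}" and h: "?f a = ?f b"
    show "a = b"
    proof (cases "a \<le> b")
      case True
      have "s+k+a = s+k+b" by (rule mod_inj_aux[of "s+k+a" N "s+k+b"]) (use h a b kN True in auto)
      then show ?thesis by simp
    next
      case False
      have "s+k+b = s+k+a" by (rule mod_inj_aux[of "s+k+b" N "s+k+a"]) (use h a b kN False in auto)
      then show ?thesis by simp
    qed
  qed
  have sub: "?f ` {..<k} \<subseteq> {t\<in>{..<N}. 1/3 < \<bar>real t / N - real s / N\<bar> \<and> \<bar>real t / N - real s / N\<bar> < 2/3}"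
  proof
    fix t assume "t \<in> ?f ` {..<k}"
    then obtain l where l: "l < k" "t = ?f l" by auto
    show "t \<in> {t\<in>{..<N}. 1/3 < \<bar>real t / N - real s / N\<bar> \<and> \<bar>real t / N - real s / N\<bar> < 2/3}"
      using grid_adj[OF assms l(1)] l(2) Np by simp
  qed
  have "card (?f ` {..<k}) = k" using inj card_image by fastforce
  moreover have "finite {t\<in>{..<N}. 1/3 < \<bar>real t / N - real s / N\<bar> \<and> \<bar>real t / N - real s / N\<bar> < 2/3}" by simp
  ultimately show ?thesis using card_mono[OF _ sub] by metis
qed

lemma propD:
  fixes x :: "nat \<Rightarrow> nat" and m :: nat
  assumes m: "1 \<le> m"
  shows "\<exists>y. m + 1 \<le> card {i\<in>{1..3*m}. Eg (x i) y}"
proof (rule ccontr)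
  assume H: "\<not> ?thesis"
  let ?I = "{1..3*m}"
  define J where "J = 2 * (\<Sum>i\<in>?I. ex (x i)) + 1"
  define N where "N = (2::nat)^J"
  define k where "k = (N+1) div 3"
  have Nm: "N mod 3 = 2" unfolding N_def J_def by (rule pow_odd_mod3)
  have k3: "3*k = N+1" unfolding k_def using Nm by presburger
  have Npos: "0 < N" unfolding N_def by simp
  define g where "g t = prod_encode (t, J)" for t
  have ptg: "pt (g t) = real t / N" if "t < N" for t
    unfolding g_def N_def using pt_encode[of t J] that N_def by simp
  have each: "k \<le> card {t\<in>{..<N}. Eg (x i) (g t)}" if i: "i \<in> ?I" for i
  proof -
    have "ex (x i) \<le> (\<Sum>i\<in>?I. ex (x i))" using i by (intro member_le_sum) auto
    hence "ex (x i) \<le> J" unfolding J_def by linarith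
    then obtain s where s: "s < N" "pt (x i) = real s / N" using pt_grid[of "x i" J] unfolding N_def by auto
    have "{t\<in>{..<N}. Eg (x i) (g t)} = {t\<in>{..<N}. 1/3 < \<bar>real t / N - real s / N\<bar> \<and> \<bar>real t / N - real s / N\<bar> < 2/3}"
      unfolding Eg_def using ptg s(2) by (auto simp: abs_minus_commute)
    then show ?thesis using grid_count[OF s(1) k3] by simp
  qed
  have "(\<Sum>t\<in>{..<N}. card {i\<in>?I. Eg (x i) (g t)}) = (\<Sum>t\<in>{..<N}. \<Sum>i\<in>?I. if Eg (x i) (g t) then 1 else (0::nat))"
    by (rule sum.cong[OF refl], rule card_sum, simp)
  also have "\<dots> = (\<Sum>i\<in>?I. \<Sum>t\<in>{..<N}. if Eg (x i) (g t) then 1 else (0::nat))"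
    by (rule sum.swap)
  also have "\<dots> = (\<Sum>i\<in>?I. card {t\<in>{..<N}. Eg (x i) (g t)})"
    by (rule sum.cong[OF refl], rule card_sum[symmetric], simp)
  also have "\<dots> \<ge> (\<Sum>i\<in>?I. k)" using each by (intro sum_mono) auto
  finally have lo: "3*m*k \<le> (\<Sum>t\<in>{..<N}. card {i\<in>?I. Eg (x i) (g t)})" by simp
  have "(\<Sum>t\<in>{..<N}. card {i\<in>?I. Eg (x i) (g t)}) \<le> (\<Sum>t\<in>{..<N}. m)"
    using H by (intro sum_mono) (metis not_less_eq_eq Suc_eq_plus1)
  moreover have "(\<Sum>t\<in>{..<N}. m) = N*m" by simp
  ultimately have "3*m*k \<le> N*m" using lo by linarith
  moreover have "3*m*k = N*m + m" using k3 by (metis add_mult_distrib mult.commute mult.left_commute nat_mult_1)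
  ultimately show False using m by linarith
qed

lemma common2:
  assumes "x \<noteq> y" "\<not> Eg x y"
  shows "\<exists>z. Eg x z \<and> Eg y z"
proof (cases "pt x = pt y")
  case False then show ?thesis using common assms by blast
next
  case True
  have ra: "0 \<le> pt x" "pt x < 1" using pt_range by auto
  show ?thesis
  proof (cases "pt x < 1/2")
    case c: True
    obtain z where "pt x + 1/3 < pt z" "pt z < pt x + 1/2" using density[of "pt x + 1/3" "pt x + 1/2"] ra c by auto
    then show ?thesis unfolding Eg_def using True ra by (intro exI[of _ z]) (auto simp: abs_if)
  next
    case c: False
    obtain z where "pt x - 1/2 < pt z" "pt z < pt x - 1/3" using density[of "pt x - 1/2" "pt x - 1/3"] ra c by auto
    then show ?thesis unfolding Eg_def using True ra by (intro exI[of _ z]) (auto simp: abs_if)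
  qed
qed

lemma distinguish:
  assumes "pt a < pt b" "pt b \<le> 1/4"
  shows "\<exists>z. \<not> Eg a z \<and> Eg b z"
proof -
  have ra: "0 \<le> pt a" using pt_range by auto
  obtain z where z: "pt a + 2/3 < pt z" "pt z < pt b + 2/3" using density[of "pt a + 2/3" "pt b + 2/3"] assms ra by auto
  show ?thesis unfolding Eg_def using z assms ra by (intro exI[of _ z]) (auto simp: abs_if)
qed

definition vv :: "nat \<Rightarrow> nat" where "vv j = prod_encode (1, j+2)"

lemma pt_vv: "pt (vv j) = 1 / 2^(j+2)"
proof -
  have "(1::nat) < 2^(j+2)" by (rule one_less_power) auto
  then show ?thesis unfolding vv_def using pt_encode by simp
qed

lemma pt_vv_inj: "i \<noteq> j \<Longrightarrow> pt (vv i) \<noteq> pt (vv j)"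
  unfolding pt_vv by (simp add: power_inject_exp)

lemma pt_vv_le: "pt (vv j) \<le> 1/4"
proof -
  have "(2::real)^(j+2) = 4 * 2^j" by (simp add: power_add)
  moreover have "(1::real) \<le> 2^j" by simp
  ultimately have "(4::real) \<le> 2^(j+2)" by linarith
  then show ?thesis unfolding pt_vv by (simp add: field_simps)
qed


theorem theorem5p2:
  shows "\<exists>(V :: nat set) (E :: nat \<Rightarrow> nat \<Rightarrow> bool).
           infinite V \<and> maximal_triangle_free V E \<and>
           (\<forall>k\<ge>1. property_D k V E) \<and>
           (\<forall>(W :: nat set) F. finite W \<longrightarrow> simple_graph W F \<longrightarrow> \<not> blow_up_of V E W F)"
proof (intro exI conjI allI impI)
  show "infinite (UNIV :: nat set)" by simp
  show "maximal_triangle_free UNIV Eg"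
    unfolding maximal_triangle_free_def simple_graph_def triangle_free_def
    using tri_free common2 by (auto simp: Eg_def abs_minus_commute)
  fix k :: nat assume "1 \<le> k"
  show "property_D k UNIV Eg"
    unfolding property_D_def using propD by auto
next
  fix W :: "nat set" and F
  assume fin: "finite W" and "simple_graph W F"
  show "\<not> blow_up_of UNIV Eg W F"
  proof
    assume "blow_up_of UNIV Eg W F"
    then obtain f where f: "f ` UNIV = W" "\<forall>u v. Eg u v \<longleftrightarrow> F (f u) (f v)"
      unfolding blow_up_of_def by auto
    have "range (f \<circ> vv) \<subseteq> W" using f by auto
    hence "finite (range (f \<circ> vv))" using fin finite_subset by blast
    hence "\<not> inj (f \<circ> vv)" using finite_imageD by blast
    then obtain i j where ij: "i \<noteq> j" "f (vv i) = f (vv j)" unfolding inj_def by auto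
    have same: "Eg (vv i) z \<longleftrightarrow> Eg (vv j) z" for z using f(2) ij(2) by metis
    have "pt (vv i) \<noteq> pt (vv j)" using pt_vv_inj ij by blast
    hence "pt (vv i) < pt (vv j) \<or> pt (vv j) < pt (vv i)" by linarith
    then show False
    proof
      assume "pt (vv i) < pt (vv j)"
      then obtain z where "\<not> Eg (vv i) z \<and> Eg (vv j) z" using distinguish pt_vv_le by blast
      with same show False by blast
    next
      assume "pt (vv j) < pt (vv i)"
      then obtain z where "\<not> Eg (vv j) z \<and> Eg (vv i) z" using distinguish pt_vv_le by blast
      with same show False by blast
    qed
  qed
qed

end
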